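(* Let $Y$ be a second countable locally compact connected Abelian group with character group $X$. Let $h$ be a real-valued characteristic function on $Y$ satisfying $h(2y)=2h^2(y)-1$ for all $y\in Y$. Then there is $x_0\in X$ such that $h(y)=\operatorname{Re}\,(x_0,y)$ for all $y\in Y$.
   Context: A function $h$ on $Y$ is a characteristic function if there is a probability distribution $\mu$ on $X$ with $h(y)=\int_X (x,y)\,d\mu(x)$ for all $y\in Y$, where $(x,y)$ is the value of the character $y$ at $x$ (equivalently of $x$ at $y$ under Pontryagin duality). *)

theory Defs
  imports "HOL-Analysis.Analysis" "HOL-Probability.Probability"
begin

definition topological_ab_group :: "('y::{topological_space, ab_group_add}) itself \<Rightarrow> bool" where
  "topological_ab_group _ \<longleftrightarrow>
     continuous_on UNIV (\<lambda>p::'y \<times> 'y. fst p + snd p) \<and> continuous_on UNIV (\<lambda>y::'y. - y)"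

definition characters :: "('y::{topological_space, ab_group_add} \<Rightarrow> complex) set" where
  "characters = {x. continuous_on UNIV x \<and> (\<forall>y. cmod (x y) = 1) \<and>
                    (\<forall>a b. x (a + b) = x a * x b)}"

definition compact_open :: "('a::topological_space \<Rightarrow> 'b::topological_space) set \<Rightarrow> ('a \<Rightarrow> 'b) topology" where
  "compact_open S = topology_generated_by {{f \<in> S. f ` K \<subseteq> U} | K U. compact K \<and> open U}"

definition borel_space_of :: "'a topology \<Rightarrow> 'a measure" where
  "borel_space_of T = sigma (topspace T) {U. openin T U}"

definition character_group :: "('y::{topological_space, ab_group_add} \<Rightarrow> complex) topology" where
  "character_group = compact_open characters"

definition characteristic_function :: "('y::{topological_space, ab_group_add} \<Rightarrow> complex) \<Rightarrow> bool" where
  "characteristic_function h \<longleftrightarrow>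
     (\<exists>\<mu>. prob_space \<mu> \<and> sets \<mu> = sets (borel_space_of (character_group :: ('y \<Rightarrow> complex) topology))
          \<and> space \<mu> = characters
          \<and> (\<forall>y. h y = (\<integral>x. x y \<partial>\<mu>)))"

end

theory Submission
  imports Defs
begin

lemma AE_witness:
  assumes "prob_space M" "AE x in M. P x"
  shows "\<exists>x\<in>space M. P x"
proof (rule ccontr)
  assume "\<not> ?thesis"
  then have "AE x in M. False" using assms(2) by (auto elim: AE_mp intro: AE_I2)
  then show False using prob_space.AE_False[OF assms(1)] by simp
qed

theorem corollary4p3:
  fixes h :: "'y::{t2_space, second_countable_topology, ab_group_add} \<Rightarrow> real"
  assumes "topological_ab_group TYPE('y)"
    and "locally_compact_space (euclidean :: 'y topology)"
    and "connected (UNIV :: 'y set)"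
    and "characteristic_function (\<lambda>y. complex_of_real (h y))"
    and hdup: "\<And>y. h (y + y) = 2 * (h y)\<^sup>2 - 1"
  shows "\<exists>x0 \<in> characters. \<forall>y. h y = Re (x0 y)"
proof -
  obtain \<mu> where P: "prob_space \<mu>"
    and S: "sets \<mu> = sets (borel_space_of (character_group :: ('y \<Rightarrow> complex) topology))"
    and Sp: "space \<mu> = characters"
    and I: "\<And>y. complex_of_real (h y) = (\<integral>x. x y \<partial>\<mu>)"
    using assms(4) unfolding characteristic_function_def by blast
  interpret prob_space \<mu> by (rule P)
  have top: "topspace (character_group :: ('y \<Rightarrow> complex) topology) = characters"
  proof -
    have m: "{f \<in> (characters :: ('y \<Rightarrow> complex) set). f ` {} \<subseteq> UNIV} \<in> {{f \<in> (characters :: ('y \<Rightarrow> complex) set). f ` K \<subseteq> U} | K U. compact K \<and> open U}"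
      by blast
    have e: "{f \<in> (characters :: ('y \<Rightarrow> complex) set). f ` {} \<subseteq> UNIV} = characters" by simp
    have "\<Union>{{f \<in> (characters :: ('y \<Rightarrow> complex) set). f ` K \<subseteq> U} | K U. compact K \<and> open U} = characters"
    proof
      show "\<Union>{{f \<in> (characters :: ('y \<Rightarrow> complex) set). f ` K \<subseteq> U} | K U. compact K \<and> open U} \<subseteq> characters" by blast
      show "characters \<subseteq> \<Union>{{f \<in> (characters :: ('y \<Rightarrow> complex) set). f ` K \<subseteq> U} | K U. compact K \<and> open U}"
        using Union_upper[OF m] unfolding e .
    qed
    then show ?thesis unfolding character_group_def compact_open_def by simp
  qed
  have meas: "(\<lambda>x. x y) \<in> borel_measurable \<mu>" for y :: 'y
  proof (rule borel_measurableI)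
    fix U :: "complex set" assume U: "open U"
    have A: "(\<lambda>x. x y) -` U \<inter> space \<mu> = {f \<in> characters. f ` {y} \<subseteq> U}"
      using Sp by auto
    have B: "openin (character_group :: ('y \<Rightarrow> complex) topology) {f \<in> characters. f ` {y} \<subseteq> U}"
      unfolding character_group_def compact_open_def
      by (rule topology_generated_by_Basis, rule CollectI, rule exI[of _ "{y}"], rule exI[of _ U]) (simp add: U)
    show "(\<lambda>x. x y) -` U \<inter> space \<mu> \<in> sets \<mu>"
    proof -
      have sub: "Collect (openin (character_group :: ('y \<Rightarrow> complex) topology)) \<subseteq> Pow (topspace character_group)"
        using openin_subset by auto
      show ?thesis unfolding S borel_space_of_def sets_measure_of[OF sub] A
        using B by (auto intro: sigma_sets.Basic)
    qed
  qed
  have bnd: "cmod (x y) = 1" if "x \<in> space \<mu>" for x y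
    using that Sp unfolding characters_def by auto
  have intg: "integrable \<mu> (\<lambda>x. x y)" for y
    by (rule integrable_const_bound[where B=1]) (use bnd meas in auto)
  define g where "g y x = Re (x y)" for y :: 'y and x :: "'y \<Rightarrow> complex"
  have gm: "g y \<in> borel_measurable \<mu>" for y unfolding g_def using meas by measurable
  have gi: "integrable \<mu> (g y)" for y unfolding g_def using intg by auto
  have gb: "(g y x)\<^sup>2 \<le> 1" if "x \<in> space \<mu>" for x y
  proof -
    have "\<bar>g y x\<bar> \<le> 1" unfolding g_def using abs_Re_le_cmod[of "x y"] bnd[OF that] by simp
    then show ?thesis by (simp add: abs_square_le_1)
  qed
  have gi2: "integrable \<mu> (\<lambda>x. (g y x)\<^sup>2)" for y
    by (rule integrable_const_bound[where B=1]) (use gm gb in auto)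
  have hE: "h y = (\<integral>x. g y x \<partial>\<mu>)" for y
    using arg_cong[OF I[of y], of Re] unfolding g_def by (simp add: intg)
  have dbl: "g (y + y) x = 2 * (g y x)\<^sup>2 - 1" if "x \<in> space \<mu>" for x y
  proof -
    have c: "x \<in> characters" using that Sp by auto
    then have "x (y + y) = x y * x y" and "cmod (x y) = 1" unfolding characters_def by auto
    then show ?thesis unfolding g_def
      by (simp add: power2_eq_square cmod_def)
  qed
  have AEy: "AE x in \<mu>. g y x = h y" for y
  proof -
    have "h (y + y) = 2 * (\<integral>x. (g y x)\<^sup>2 \<partial>\<mu>) - 1"
    proof -
      have "h (y + y) = (\<integral>x. 2 * (g y x)\<^sup>2 - 1 \<partial>\<mu>)"
        unfolding hE by (rule integral_cong_AE) (use gm dbl in auto)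
      also have "\<dots> = 2 * (\<integral>x. (g y x)\<^sup>2 \<partial>\<mu>) - 1"
        using gi2 by (simp add: prob_space)
      finally show ?thesis .
    qed
    then have e: "(\<integral>x. (g y x)\<^sup>2 \<partial>\<mu>) = (h y)\<^sup>2" using hdup[of y] by simp
    have "(\<integral>x. (g y x - h y)\<^sup>2 \<partial>\<mu>) = (\<integral>x. (g y x)\<^sup>2 \<partial>\<mu>) - 2 * h y * (\<integral>x. g y x \<partial>\<mu>) + (h y)\<^sup>2"
      using gi gi2 by (simp add: power2_diff prob_space)
    also have "\<dots> = 0" using e hE[of y] by (simp add: power2_eq_square)
    finally have "(\<integral>x. (g y x - h y)\<^sup>2 \<partial>\<mu>) = 0" .
    moreover have "integrable \<mu> (\<lambda>x. (g y x - h y)\<^sup>2)"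
      using gi gi2 by (simp add: power2_diff)
    ultimately have "AE x in \<mu>. (g y x - h y)\<^sup>2 = 0"
      by (subst (asm) integral_nonneg_eq_0_iff_AE) auto
    then show ?thesis by (auto elim: AE_mp intro: AE_I2)
  qed
  obtain D :: "'y set" where D: "countable D" "\<And>X. open X \<Longrightarrow> X \<noteq> {} \<Longrightarrow> \<exists>d\<in>D. d \<in> X"
    using countable_dense_setE by blast
  have AED: "AE x in \<mu>. \<forall>d\<in>D. g d x = h d"
    using D(1) AEy by (simp add: AE_ball_countable)
  obtain x0 where x0: "x0 \<in> space \<mu>" "\<forall>d\<in>D. g d x0 = h d"
    using AE_witness[OF P AED] by blast
  have contRe: "continuous_on UNIV (\<lambda>z. Re (x z))" if "x \<in> space \<mu>" for x
    using that Sp unfolding characters_def by (auto intro: continuous_intros)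
  have "h y = Re (x0 y)" for y
  proof -
    have "AE x in \<mu>. (\<forall>d\<in>D. g d x = h d) \<and> g y x = h y"
      using AED AEy[of y] by (auto elim: AE_mp intro: AE_I2)
    then obtain x1 where x1: "x1 \<in> space \<mu>" "\<forall>d\<in>D. g d x1 = h d" "g y x1 = h y"
      using AE_witness[OF P] by blast
    show ?thesis
    proof (rule ccontr)
      assume ne: "h y \<noteq> Re (x0 y)"
      have "open {z. Re (x0 z) \<noteq> Re (x1 z)}"
        by (rule open_Collect_neq) (use contRe x0 x1 in auto)
      moreover have "y \<in> {z. Re (x0 z) \<noteq> Re (x1 z)}" using ne x1 by (simp add: g_def)
      ultimately obtain d where "d \<in> D" "Re (x0 d) \<noteq> Re (x1 d)" using D(2) by blast
      then show False using x0 x1 by (simp add: g_def)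
    qed
  qed
  then show ?thesis using x0 Sp by auto
qed

end
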